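(* Let $0<\alpha\le1$ and let $f\ge0$ be a solution of the spatially homogeneous inelastic Boltzmann equation for hard spheres with coefficient of normal restitution $\alpha$, $\partial_t f=Q(f,f)$, $f(0,\cdot)=f_0$, where $\int f_0\,dv=1$, $\int f_0(v)v\,dv=0$, $\int f_0(v)|v|^2\,dv=1$, and $f_0\in L^\infty_s$ for some $s>2$. Then the cooling time $$T_c:=\inf\{T\ge0:\ \mathcal{E}(t)=0\ \text{for all } t>T\}=\sup\{S\ge0:\ \mathcal{E}(t)>0\ \text{for all } t<S\},\qquad \mathcal{E}(t)=\int_{\mathbb{R}^3}f(t,v)|v|^2\,dv,$$ is infinite: $T_c=+\infty$.
   Context: Notation: $\beta=\frac{1+\alpha}{2}$, $\gamma=\frac12(1+\frac1\alpha)$, $\mathbb{S}^2_+$ a hemisphere. Post-collisional velocities $v'=v-\beta((v-v_* )\cdot n)n$, $v_*'=v_*+\beta((v-v_* )\cdot n)n$; pre-collisional ${}'v=v-\gamma((v-v_* )\cdot n)n$, ${}'v_*=v_*+\gamma((v-v_* )\cdot n)n$. The collision operator is $Q(f,g)=Q^+(f,g)-g\,Lf$, $Q^+(f,g)(v)=\alpha^{-2}\int_{\mathbb{R}^3}\int_{\mathbb{S}^2_+}|(v-v_* )\cdot n|f({}'v_* )g({}'v)\,dn\,dv_*$, $Lf(v)=\pi\int_{\mathbb{R}^3}|v-v_*|f(v_* )\,dv_*$ (weak form: $\int Q(f,g)\phi=\iiint|(v-v_* )\cdot n|f(v_* )g(v)(\phi(v')-\phi(v))\,dn\,dv_*\,dv$).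 $\|f\|_{\infty,s}=\operatorname{ess\,sup}_v f(v)(1+|v|^2)^{s/2}$ and $L^\infty_s$ is the space of measurable $f$ with this norm finite. *)

theory Defs
  imports "HOL-Analysis.Analysis"
begin

type_synonym vel = "real ^ 3"

text \<open>Integral over the hemisphere S^2_+ = {n. norm n = 1, n$1 > 0} w.r.t. surface measure,
  computed via polar coordinates: int_{S^2_+} g dsigma = 3 * int_{B(0,1), x$1>0} g(x/|x|) dx.\<close>
definition hemi_int :: "(vel \<Rightarrow> real) \<Rightarrow> real" where
  "hemi_int g = 3 * (LINT x|lborel. indicator {x::vel. norm x < 1 \<and> x $ 1 > 0} x * g (x /\<^sub>R norm x))"

definition post_vel :: "real \<Rightarrow> vel \<Rightarrow> vel \<Rightarrow> vel \<Rightarrow> vel" where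
  "post_vel \<alpha> v vs n = v - (((1 + \<alpha>) / 2) * ((v - vs) \<bullet> n)) *\<^sub>R n"

definition Q_weak :: "real \<Rightarrow> (vel \<Rightarrow> real) \<Rightarrow> (vel \<Rightarrow> real) \<Rightarrow> real" where
  "Q_weak \<alpha> g \<phi> = (LINT v|lborel. LINT vs|lborel.
      hemi_int (\<lambda>n. \<bar>(v - vs) \<bullet> n\<bar> * g vs * g v * (\<phi> (post_vel \<alpha> v vs n) - \<phi> v)))"

definition in_Linf_weighted :: "real \<Rightarrow> (vel \<Rightarrow> real) \<Rightarrow> bool" where
  "in_Linf_weighted s g \<longleftrightarrow> g \<in> borel_measurable lborel \<and>
     (\<exists>C. AE v in lborel. \<bar>g v\<bar> * (1 + (norm v)\<^sup>2) powr (s / 2) \<le> C)"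

definition test_fun :: "(vel \<Rightarrow> real) \<Rightarrow> bool" where
  "test_fun \<phi> \<longleftrightarrow> continuous_on UNIV \<phi> \<and> bounded {v. \<phi> v \<noteq> 0}"

text \<open>Weak solution on [0,infinity) in C([0,inf); L^1_2) \<inter> L^1_loc([0,inf); L^1_3).\<close>
definition is_solution :: "real \<Rightarrow> (vel \<Rightarrow> real) \<Rightarrow> (real \<Rightarrow> vel \<Rightarrow> real) \<Rightarrow> bool" where
  "is_solution \<alpha> f0 f \<longleftrightarrow>
     (\<forall>t\<ge>0. AE v in lborel. f t v \<ge> 0) \<and>
     (AE v in lborel. f 0 v = f0 v) \<and>
     (\<forall>t\<ge>0. integrable lborel (\<lambda>v. f t v * (1 + (norm v)\<^sup>2))) \<and>
     (\<forall>t0\<ge>0. ((\<lambda>t. LINT v|lborel. \<bar>f t v - f t0 v\<bar> * (1 + (norm v)\<^sup>2)) \<longlongrightarrow> 0)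
                (at t0 within {0..})) \<and>
     (\<forall>T\<ge>0. set_integrable lborel {0..T} (\<lambda>t. LINT v|lborel. f t v * (1 + (norm v) ^ 3))) \<and>
     (\<forall>\<phi>. test_fun \<phi> \<longrightarrow> (\<forall>t\<ge>0.
         set_integrable lborel {0..t} (\<lambda>s. Q_weak \<alpha> (f s) \<phi>) \<and>
         (LINT v|lborel. f t v * \<phi> v) =
           (LINT v|lborel. f0 v * \<phi> v) + (LINT s:{0..t}|lborel. Q_weak \<alpha> (f s) \<phi>)))"

definition energy :: "(real \<Rightarrow> vel \<Rightarrow> real) \<Rightarrow> real \<Rightarrow> real" where
  "energy f t = (LINT v|lborel. f t v * (norm v)\<^sup>2)"

definition cooling_time :: "(real \<Rightarrow> vel \<Rightarrow> real) \<Rightarrow> ereal" where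
  "cooling_time f = Inf {ereal T | T. T \<ge> 0 \<and> (\<forall>t>T. energy f t = 0)}"

end

theory Submission
  imports Defs
begin

lemma abs_int_bound:
  fixes h H :: "'a \<Rightarrow> real"
  assumes "\<And>x. \<bar>h x\<bar> \<le> H x" "integrable M H"
  shows "\<bar>integral\<^sup>L M h\<bar> \<le> integral\<^sup>L M H"
proof (cases "integrable M h")
  case True
  have "\<bar>integral\<^sup>L M h\<bar> \<le> integral\<^sup>L M (\<lambda>x. \<bar>h x\<bar>)"
    using integral_abs_bound by blast
  also have "\<dots> \<le> integral\<^sup>L M H"
    using True assms by (intro integral_mono) auto
  finally show ?thesis .
next
  case False
  then show ?thesis using assms
    by (simp add: not_integrable_integral_eq) (metis abs_ge_zero integral_nonneg_AE order_trans AE_I2)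
qed

definition hemiS :: "vel set" where "hemiS = {x::vel. norm x < 1 \<and> x $ 1 > 0}"

lemma hemiS_sets: "hemiS \<in> sets lborel"
  unfolding hemiS_def by measurable

lemma hemiS_fin: "emeasure lborel hemiS < \<infinity>"
proof -
  have "hemiS \<subseteq> cball 0 1" unfolding hemiS_def by auto
  then have "bounded hemiS" using bounded_cball bounded_subset by blast
  then show ?thesis by (rule emeasure_bounded_finite)
qed

lemma hemi_bound:
  assumes "c \<ge> 0" "\<And>x. x \<in> hemiS \<Longrightarrow> \<bar>g (x /\<^sub>R norm x)\<bar> \<le> c"
  shows "\<bar>hemi_int g\<bar> \<le> 3 * measure lborel hemiS * c"
proof -
  have int: "integrable lborel (\<lambda>x. indicator hemiS x * c)"
    using hemiS_sets hemiS_fin by (intro integrable_mult_left) auto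
  have "\<bar>LINT x|lborel. indicator {x::vel. norm x < 1 \<and> x $ 1 > 0} x * g (x /\<^sub>R norm x)\<bar>
     \<le> (LINT x|lborel. indicator hemiS x * c)"
    apply (rule abs_int_bound[OF _ int])
    using assms unfolding hemiS_def by (auto simp: indicator_def)
  also have "\<dots> = measure lborel hemiS * c" by simp
  finally show ?thesis unfolding hemi_int_def by simp
qed

definition phiR :: "real \<Rightarrow> vel \<Rightarrow> real" where
  "phiR R v = max 0 (min 1 (R + 1 - norm v))"

definition ww :: "vel \<Rightarrow> real" where "ww v = 1 + (norm v)\<^sup>2"

lemma phiR_test: "test_fun (phiR R)"
proof -
  have "continuous_on UNIV (phiR R)" unfolding phiR_def by (intro continuous_intros)
  moreover have "{v. phiR R v \<noteq> 0} \<subseteq> cball 0 (R + 1)"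
    unfolding phiR_def by (auto simp: max_def min_def split: if_splits)
  then have "bounded {v. phiR R v \<noteq> 0}" using bounded_cball bounded_subset by blast
  ultimately show ?thesis unfolding test_fun_def by blast
qed

lemma phiR_range: "0 \<le> phiR R v" "phiR R v \<le> 1"
  unfolding phiR_def by auto

lemma phiR_one: "norm v \<le> R \<Longrightarrow> phiR R v = 1"
  unfolding phiR_def by auto

lemma post_vel_norm:
  assumes "0 < \<alpha>" "\<alpha> \<le> 1" "norm n = 1"
  shows "norm (post_vel \<alpha> v vs n) \<le> 2 * norm v + norm vs"
proof -
  have cs: "\<bar>(v - vs) \<bullet> n\<bar> \<le> norm (v - vs)"
    using Cauchy_Schwarz_ineq2[of "v - vs" n] assms by simp
  have "norm (post_vel \<alpha> v vs n) \<le> norm v + norm ((((1 + \<alpha>) / 2) * ((v - vs) \<bullet> n)) *\<^sub>R n)"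
    unfolding post_vel_def by (rule norm_triangle_ineq4)
  also have "norm ((((1 + \<alpha>) / 2) * ((v - vs) \<bullet> n)) *\<^sub>R n) = \<bar>(1 + \<alpha>) / 2\<bar> * \<bar>(v - vs) \<bullet> n\<bar>"
    using assms by (simp add: abs_mult)
  also have "\<dots> \<le> 1 * norm (v - vs)"
    using assms cs by (intro mult_mono) auto
  also have "norm (v - vs) \<le> norm v + norm vs" by (rule norm_triangle_ineq4)
  finally show ?thesis by simp
qed

lemma ab_bound:
  fixes a b R :: real
  assumes "a \<ge> 0" "b \<ge> 0" "R \<ge> 3" "a > R / 3"
  shows "a + b \<le> 12 / R * (1 + a\<^sup>2) * (1 + b\<^sup>2)"
proof -
  have a1: "a > 1" using assms by simp
  have "a + b \<le> (1 + a) * (1 + b)" using assms by (simp add: algebra_simps)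
  also have "1 + a \<le> 6 * (1 + a\<^sup>2) / R"
  proof -
    have "R * (1 + a) \<le> R * (2 * a)" using a1 assms by simp
    also have "\<dots> \<le> 3 * a * (2 * a)" using assms a1 by (intro mult_right_mono) auto
    also have "\<dots> \<le> 6 * (1 + a\<^sup>2)" by (simp add: power2_eq_square)
    finally show ?thesis using assms by (simp add: field_simps)
  qed
  also have "1 + b \<le> 2 * (1 + b\<^sup>2)"
  proof -
    have "0 \<le> (b - 1)\<^sup>2" by simp
    then have "0 \<le> b\<^sup>2 - 2 * b + 1" by (simp add: power2_diff)
    moreover have "0 \<le> b\<^sup>2" by simp
    moreover have "2 * (1 + b\<^sup>2) = 2 + 2 * b\<^sup>2" by simp
    ultimately show ?thesis using assms by linarith
  qed
  then have "6 * (1 + a\<^sup>2) / R * (1 + b) \<le> 6 * (1 + a\<^sup>2) / R * (2 * (1 + b\<^sup>2))"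
    using assms by (intro mult_left_mono) auto
  then have "(1 + a) * (1 + b) \<le> 6 * (1 + a\<^sup>2) / R * (2 * (1 + b\<^sup>2))"
    using \<open>1 + a \<le> 6 * (1 + a\<^sup>2) / R\<close> assms
    by (meson dual_order.trans mult_right_mono add_nonneg_nonneg zero_le_one)
  then show ?thesis using \<open>a + b \<le> (1 + a) * (1 + b)\<close> by (simp add: field_simps)
qed

lemma inner_bound:
  assumes "0 < \<alpha>" "\<alpha> \<le> 1" "R \<ge> 3" "norm n = 1"
  shows "\<bar>\<bar>(v - vs) \<bullet> n\<bar> * g vs * g v * (phiR R (post_vel \<alpha> v vs n) - phiR R v)\<bar>
     \<le> 12 / R * (\<bar>g v\<bar> * ww v) * (\<bar>g vs\<bar> * ww vs)"
proof (cases "norm v \<le> R / 3 \<and> norm vs \<le> R / 3")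
  case True
  then have "norm (post_vel \<alpha> v vs n) \<le> R" using post_vel_norm[OF assms(1,2,4), of v vs] by simp
  then have "phiR R (post_vel \<alpha> v vs n) = 1" "phiR R v = 1" using True assms
    by (auto intro!: phiR_one)
  then show ?thesis using assms by (simp add: ww_def)
next
  case False
  have cs: "\<bar>(v - vs) \<bullet> n\<bar> \<le> norm v + norm vs"
    using Cauchy_Schwarz_ineq2[of "v - vs" n] assms norm_triangle_ineq4[of v vs] by simp
  have ab: "norm v + norm vs \<le> 12 / R * ww v * ww vs"
  proof (cases "norm v > R / 3")
    case True
    then show ?thesis using ab_bound[of "norm v" "norm vs" R] assms unfolding ww_def by simp
  next
    case False
    then have "norm vs > R / 3" using \<open>\<not> (norm v \<le> R / 3 \<and> norm vs \<le> R / 3)\<close> by simp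
    then have "norm vs + norm v \<le> 12 / R * (1 + (norm vs)\<^sup>2) * (1 + (norm v)\<^sup>2)"
      using ab_bound[of "norm vs" "norm v" R] assms by simp
    moreover have "12 / R * (1 + (norm vs)\<^sup>2) * (1 + (norm v)\<^sup>2) = 12 / R * (1 + (norm v)\<^sup>2) * (1 + (norm vs)\<^sup>2)"
      by (simp only: ac_simps)
    ultimately show ?thesis unfolding ww_def by linarith
  qed
  have nn0: "0 \<le> 12 / R * ww v * ww vs * (\<bar>g vs\<bar> * \<bar>g v\<bar>)"
    using assms unfolding ww_def by (intro mult_nonneg_nonneg) (auto simp: add_nonneg_nonneg)
  have d: "\<bar>phiR R (post_vel \<alpha> v vs n) - phiR R v\<bar> \<le> 1"
    using phiR_range[of R] by (smt (verit))
  have "\<bar>\<bar>(v - vs) \<bullet> n\<bar> * g vs * g v * (phiR R (post_vel \<alpha> v vs n) - phiR R v)\<bar>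
      = \<bar>(v - vs) \<bullet> n\<bar> * (\<bar>g vs\<bar> * \<bar>g v\<bar>) * \<bar>phiR R (post_vel \<alpha> v vs n) - phiR R v\<bar>"
    by (simp add: abs_mult)
  also have "\<dots> \<le> (12 / R * ww v * ww vs) * (\<bar>g vs\<bar> * \<bar>g v\<bar>) * 1"
    using cs ab d nn0 by (intro mult_mono) auto
  finally show ?thesis by (simp add: algebra_simps)
qed


lemma Q_bound:
  assumes "0 < \<alpha>" "\<alpha> \<le> 1" "R \<ge> 3" "integrable lborel (\<lambda>v. g v * ww v)"
  shows "\<bar>Q_weak \<alpha> g (phiR R)\<bar>
    \<le> (3 * measure lborel hemiS * (12 / R) * (LINT v|lborel. \<bar>g v\<bar> * ww v)) * (LINT v|lborel. \<bar>g v\<bar> * ww v)"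
proof -
  define V where "V = measure lborel hemiS"
  define M where "M = (LINT v|lborel. \<bar>g v\<bar> * ww v)"
  have Vnn: "V \<ge> 0" unfolding V_def by simp
  have wpos: "\<And>v. ww v > 0" unfolding ww_def by (simp add: add_pos_nonneg)
  have intM: "integrable lborel (\<lambda>v. \<bar>g v\<bar> * ww v)"
  proof -
    have "integrable lborel (\<lambda>v. \<bar>g v * ww v\<bar>)" using assms(4) by (rule integrable_abs)
    moreover have "\<And>v. \<bar>g v * ww v\<bar> = \<bar>g v\<bar> * ww v" using wpos by (simp add: abs_mult less_imp_le)
    ultimately show ?thesis by simp
  qed
  have Mnn: "M \<ge> 0" unfolding M_def using wpos by (intro integral_nonneg_AE AE_I2 mult_nonneg_nonneg abs_ge_zero less_imp_le)
  have inner: "\<bar>hemi_int (\<lambda>n. \<bar>(v - vs) \<bullet> n\<bar> * g vs * g v * (phiR R (post_vel \<alpha> v vs n) - phiR R v))\<bar>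
      \<le> (3 * V * (12 / R) * (\<bar>g v\<bar> * ww v)) * (\<bar>g vs\<bar> * ww vs)" for v vs
  proof -
    have "\<bar>hemi_int (\<lambda>n. \<bar>(v - vs) \<bullet> n\<bar> * g vs * g v * (phiR R (post_vel \<alpha> v vs n) - phiR R v))\<bar>
      \<le> 3 * V * (12 / R * (\<bar>g v\<bar> * ww v) * (\<bar>g vs\<bar> * ww vs))"
      unfolding V_def
    proof (rule hemi_bound)
      show "0 \<le> 12 / R * (\<bar>g v\<bar> * ww v) * (\<bar>g vs\<bar> * ww vs)"
        using assms wpos by (intro mult_nonneg_nonneg) (auto intro: less_imp_le)
      fix x :: vel assume "x \<in> hemiS"
      then have "x \<noteq> 0" unfolding hemiS_def by auto
      then have "norm (x /\<^sub>R norm x) = 1" by simp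
      then show "\<bar>\<bar>(v - vs) \<bullet> (x /\<^sub>R norm x)\<bar> * g vs * g v *
          (phiR R (post_vel \<alpha> v vs (x /\<^sub>R norm x)) - phiR R v)\<bar>
        \<le> 12 / R * (\<bar>g v\<bar> * ww v) * (\<bar>g vs\<bar> * ww vs)"
        using inner_bound[OF assms(1-3)] by blast
    qed
    then show ?thesis by (simp add: algebra_simps)
  qed
  have middle: "\<bar>LINT vs|lborel. hemi_int (\<lambda>n. \<bar>(v - vs) \<bullet> n\<bar> * g vs * g v * (phiR R (post_vel \<alpha> v vs n) - phiR R v))\<bar>
      \<le> (3 * V * (12 / R) * M) * (\<bar>g v\<bar> * ww v)" for v
  proof -
    have "\<bar>LINT vs|lborel. hemi_int (\<lambda>n. \<bar>(v - vs) \<bullet> n\<bar> * g vs * g v * (phiR R (post_vel \<alpha> v vs n) - phiR R v))\<bar>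
       \<le> (LINT vs|lborel. (3 * V * (12 / R) * (\<bar>g v\<bar> * ww v)) * (\<bar>g vs\<bar> * ww vs))"
      by (rule abs_int_bound[OF inner]) (intro integrable_mult_right intM)
    also have "\<dots> = (3 * V * (12 / R) * (\<bar>g v\<bar> * ww v)) * M" unfolding M_def by simp
    finally show ?thesis by (simp add: algebra_simps)
  qed
  have "\<bar>Q_weak \<alpha> g (phiR R)\<bar> \<le> (LINT v|lborel. (3 * V * (12 / R) * M) * (\<bar>g v\<bar> * ww v))"
    unfolding Q_weak_def
    by (rule abs_int_bound[OF middle]) (intro integrable_mult_right intM)
  also have "\<dots> = (3 * V * (12 / R) * M) * M" unfolding M_def by simp
  finally show ?thesis unfolding V_def M_def .
qed


lemma abs_ww_integrable:
  assumes "integrable lborel (\<lambda>v. g v * (1 + (norm v)\<^sup>2))"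
  shows "integrable lborel (\<lambda>v. \<bar>g v\<bar> * ww v)"
proof -
  have "integrable lborel (\<lambda>v. \<bar>g v * (1 + (norm v)\<^sup>2)\<bar>)" using assms by (rule integrable_abs)
  moreover have "\<And>v. \<bar>g v * (1 + (norm v)\<^sup>2)\<bar> = \<bar>g v\<bar> * ww v"
    unfolding ww_def by (simp add: abs_mult add_nonneg_nonneg)
  ultimately show ?thesis by simp
qed

lemma ww_pos: "ww v > 0" unfolding ww_def by (simp add: add_pos_nonneg)

lemma meas_from_ww:
  fixes g :: "vel \<Rightarrow> real"
  assumes "integrable lborel (\<lambda>v. g v * (1 + (norm v)\<^sup>2))"
  shows "g \<in> borel_measurable lborel"
proof -
  have m1: "(\<lambda>v. g v * (1 + (norm v)\<^sup>2)) \<in> borel_measurable lborel"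
    using assms by (rule borel_measurable_integrable)
  have m2: "(\<lambda>v::vel. 1 / (1 + (norm v)\<^sup>2)) \<in> borel_measurable lborel" by measurable
  have "(\<lambda>v. g v * (1 + (norm v)\<^sup>2) * (1 / (1 + (norm v)\<^sup>2))) \<in> borel_measurable lborel"
    using m1 m2 by measurable
  moreover have "g v * (1 + (norm v)\<^sup>2) * (1 / (1 + (norm v)\<^sup>2)) = g v" for v :: vel
  proof -
    have "1 + (norm v)\<^sup>2 > 0" by (simp add: add_pos_nonneg)
    then show ?thesis by simp
  qed
  ultimately show ?thesis by simp
qed

theorem corollary1p2:
  fixes \<alpha> s :: real and f0 :: "vel \<Rightarrow> real" and f :: "real \<Rightarrow> vel \<Rightarrow> real"
  assumes "0 < \<alpha>" and "\<alpha> \<le> 1"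
    and "\<forall>v. f0 v \<ge> 0"
    and "integrable lborel (\<lambda>v. f0 v * (1 + (norm v)\<^sup>2))"
    and "(LINT v|lborel. f0 v) = 1"
    and "(LINT v|lborel. f0 v *\<^sub>R v) = 0"
    and "(LINT v|lborel. f0 v * (norm v)\<^sup>2) = 1"
    and "s > 2" and "in_Linf_weighted s f0"
    and "is_solution \<alpha> f0 f"
  shows "cooling_time f = \<infinity>"
proof -
  have nn: "\<forall>t\<ge>0. AE v in lborel. f t v \<ge> 0" using assms(10) unfolding is_solution_def by blast
  have L12: "\<forall>t\<ge>0. integrable lborel (\<lambda>v. f t v * (1 + (norm v)\<^sup>2))"
    using assms(10) unfolding is_solution_def by blast
  have cont: "\<forall>t0\<ge>0. ((\<lambda>t. LINT v|lborel. \<bar>f t v - f t0 v\<bar> * (1 + (norm v)\<^sup>2)) \<longlongrightarrow> 0)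
                (at t0 within {0..})" using assms(10) unfolding is_solution_def by blast
  have weak: "\<forall>\<phi>. test_fun \<phi> \<longrightarrow> (\<forall>t\<ge>0.
         set_integrable lborel {0..t} (\<lambda>s. Q_weak \<alpha> (f s) \<phi>) \<and>
         (LINT v|lborel. f t v * \<phi> v) =
           (LINT v|lborel. f0 v * \<phi> v) + (LINT s:{0..t}|lborel. Q_weak \<alpha> (f s) \<phi>))"
    using assms(10) unfolding is_solution_def by blast
  define V where "V = measure lborel hemiS"
  have Vnn: "V \<ge> 0" unfolding V_def by simp
  define Mf where "Mf s = (LINT v|lborel. \<bar>f s v\<bar> * ww v)" for s
  have Mfnn: "Mf s \<ge> 0" for s
    unfolding Mf_def using ww_pos by (intro integral_nonneg_AE AE_I2 mult_nonneg_nonneg abs_ge_zero less_imp_le)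
  define A where "A = (LINT v|lborel. f0 v * ww v)"
  have Ann: "A \<ge> 0" unfolding A_def using ww_pos assms(3)
    by (intro integral_nonneg_AE AE_I2 mult_nonneg_nonneg) (auto intro: less_imp_le)
  have intf0: "integrable lborel f0"
    using assms(5) not_integrable_integral_eq by fastforce
  have f0meas: "f0 \<in> borel_measurable lborel" using intf0 by (rule borel_measurable_integrable)
  have intf0w: "integrable lborel (\<lambda>v. f0 v * ww v)" using assms(4) unfolding ww_def .
  have key: "energy f t \<noteq> 0" if t0: "t \<ge> 0" for t
  proof
    assume E0: "energy f t = 0"
    have meas: "f t \<in> borel_measurable lborel" using L12 t0 by (intro meas_from_ww) auto
    have int2: "integrable lborel (\<lambda>v. f t v * (norm v)\<^sup>2)"
    proof (rule Bochner_Integration.integrable_bound)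
      show "integrable lborel (\<lambda>v. f t v * (1 + (norm v)\<^sup>2))" using L12 t0 by auto
      show "(\<lambda>v. f t v * (norm v)\<^sup>2) \<in> borel_measurable lborel" using meas by measurable
      show "AE v in lborel. norm (f t v * (norm v)\<^sup>2) \<le> norm (f t v * (1 + (norm v)\<^sup>2))"
        by (intro AE_I2) (simp add: abs_mult mult_left_mono)
    qed
    have "AE v in lborel. 0 \<le> f t v" using nn t0 by auto
    then have "AE v in lborel. 0 \<le> f t v * (norm v)\<^sup>2" by eventually_elim simp
    then have "AE v in lborel. f t v * (norm v)\<^sup>2 = 0"
      using integral_nonneg_eq_0_iff_AE[OF int2] E0 unfolding energy_def by simp
    then have ft0: "AE v in lborel. f t v = 0"
      using AE_lborel_singleton[of "0::vel"] by eventually_elim simp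
    have lhs0: "(LINT v|lborel. f t v * phiR R v) = 0" for R
      using ft0 by (intro integral_eq_zero_AE) (auto elim: AE_mp)
    have contMf: "continuous_on {0..t} Mf"
      unfolding continuous_on_def
    proof
      fix s0 assume s0: "s0 \<in> {0..t}"
      define D where "D s = (LINT v|lborel. \<bar>f s v - f s0 v\<bar> * (1 + (norm v)\<^sup>2))" for s
      have "(D \<longlongrightarrow> 0) (at s0 within {0..})" using cont s0 unfolding D_def by auto
      then have D0: "(D \<longlongrightarrow> 0) (at s0 within {0..t})"
        by (rule tendsto_within_subset) auto
      have le: "norm (Mf s - Mf s0) \<le> D s" if s: "s \<in> {0..t}" for s
      proof -
        have i1: "integrable lborel (\<lambda>v. \<bar>f s v\<bar> * ww v)" using L12 s by (intro abs_ww_integrable) auto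
        have i2: "integrable lborel (\<lambda>v. \<bar>f s0 v\<bar> * ww v)" using L12 s0 by (intro abs_ww_integrable) auto
        have i3: "integrable lborel (\<lambda>v. \<bar>f s v - f s0 v\<bar> * (1 + (norm v)\<^sup>2))"
        proof -
          have "integrable lborel (\<lambda>v. \<bar>f s v * (1 + (norm v)\<^sup>2) - f s0 v * (1 + (norm v)\<^sup>2)\<bar>)"
            using L12 s s0 by (intro integrable_abs integrable_diff) auto
          moreover have "\<And>v. \<bar>f s v * (1 + (norm v)\<^sup>2) - f s0 v * (1 + (norm v)\<^sup>2)\<bar>
              = \<bar>f s v - f s0 v\<bar> * (1 + (norm v)\<^sup>2)"
            by (simp add: left_diff_distrib[symmetric] abs_mult add_nonneg_nonneg)
          ultimately show ?thesis by simp
        qed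
        have "Mf s - Mf s0 = (LINT v|lborel. \<bar>f s v\<bar> * ww v - \<bar>f s0 v\<bar> * ww v)"
          unfolding Mf_def using i1 i2 by (simp add: integral_diff)
        then have "\<bar>Mf s - Mf s0\<bar> \<le> D s"
          unfolding D_def
          apply simp
          apply (rule abs_int_bound[OF _ i3])
          using ww_pos unfolding ww_def
          by (simp add: left_diff_distrib[symmetric] abs_mult add_nonneg_nonneg mult_right_mono)
        then show ?thesis by simp
      qed
      have "((\<lambda>s. Mf s - Mf s0) \<longlongrightarrow> 0) (at s0 within {0..t})"
        using le by (intro Lim_null_comparison[OF _ D0]) (auto simp: eventually_at_filter intro!: always_eventually)
      then show "(Mf \<longlongrightarrow> Mf s0) (at s0 within {0..t})" by (rule LIM_zero_cancel)
    qed
    obtain sm where "sm \<in> {0..t}" and smax: "\<forall>y\<in>{0..t}. Mf y \<le> Mf sm"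
      using continuous_attains_sup[OF compact_Icc _ contMf] t0 by auto
    define K where "K = Mf sm"
    have Knn: "K \<ge> 0" unfolding K_def by (rule Mfnn)
    have MK: "\<And>y. y \<in> {0..t} \<Longrightarrow> Mf y \<le> K" using smax unfolding K_def by auto
    define C where "C = 36 * V * K * K * t"
    have Cnn: "C \<ge> 0" unfolding C_def using Vnn Knn t0 by simp
    define R where "R = 3 + 2 * A + 2 * C"
    have R3: "R \<ge> 3" unfolding R_def using Ann Cnn by simp
    have Qb: "\<bar>Q_weak \<alpha> (f y) (phiR R)\<bar> \<le> C / t / R" if y: "y \<in> {0..t}" "t > 0" for y
    proof -
      have "\<bar>Q_weak \<alpha> (f y) (phiR R)\<bar> \<le> (3 * V * (12 / R) * Mf y) * Mf y"
        using Q_bound[OF assms(1,2) R3, of "f y"] L12 y unfolding Mf_def ww_def V_def by auto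
      also have "\<dots> \<le> (3 * V * (12 / R) * K) * K"
        using MK[OF y(1)] Mfnn[of y] Vnn R3 Knn
        by (intro mult_mono mult_left_mono) auto
      also have "\<dots> = C / t / R" unfolding C_def using y R3 by (simp add: field_simps)
      finally show ?thesis .
    qed
    have setQ: "\<bar>LINT y:{0..t}|lborel. Q_weak \<alpha> (f y) (phiR R)\<bar> \<le> C / R"
    proof (cases "t = 0")
      case True
      have "(LINT y:{0..t}|lborel. Q_weak \<alpha> (f y) (phiR R)) = 0"
        unfolding set_lebesgue_integral_def using True
        by (intro integral_eq_zero_AE) (use AE_lborel_singleton[of "0::real"] in \<open>eventually_elim, auto\<close>)
      then show ?thesis using Cnn R3 by simp
    next
      case False
      then have tp: "t > 0" using t0 by simp
      have "\<bar>LINT y:{0..t}|lborel. Q_weak \<alpha> (f y) (phiR R)\<bar>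
          \<le> (LINT y|lborel. indicator {0..t} y * (C / t / R))"
        unfolding set_lebesgue_integral_def
      proof (rule abs_int_bound)
        show "integrable lborel (\<lambda>y. indicator {0..t} y * (C / t / R))"
          using t0 by (intro integrable_mult_left integrable_real_indicator) (auto simp: emeasure_lborel_Icc)
        fix y
        show "\<bar>indicator {0..t} y *\<^sub>R Q_weak \<alpha> (f y) (phiR R)\<bar> \<le> indicator {0..t} y * (C / t / R)"
          using Qb[OF _ tp, of y] by (cases "y \<in> {0..t}") auto
      qed
      also have "\<dots> = C / R" using tp by simp
      finally show ?thesis .
    qed
    have f0b: "(LINT v|lborel. f0 v * phiR R v) \<ge> 1 - A / (1 + R\<^sup>2)"
    proof -
      have phim: "phiR R \<in> borel_measurable lborel" unfolding phiR_def by measurable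
      have i1: "integrable lborel (\<lambda>v. f0 v * phiR R v)"
      proof (rule Bochner_Integration.integrable_bound[OF intf0])
        show "(\<lambda>v. f0 v * phiR R v) \<in> borel_measurable lborel" using f0meas phim by measurable
        show "AE v in lborel. norm (f0 v * phiR R v) \<le> norm (f0 v)"
          using phiR_range[of R] assms(3)
          by (intro AE_I2) (simp add: abs_mult mult_left_le)
      qed
      have i2: "integrable lborel (\<lambda>v. f0 v - f0 v * ww v / (1 + R\<^sup>2))"
        using intf0 intf0w by auto
      have pw: "f0 v - f0 v * ww v / (1 + R\<^sup>2) \<le> f0 v * phiR R v" for v
      proof (cases "norm v \<le> R")
        case True
        then have "phiR R v = 1" by (rule phiR_one)
        moreover have "f0 v * ww v / (1 + R\<^sup>2) \<ge> 0" using assms(3) ww_pos[of v]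
          by (simp add: add_pos_nonneg)
        ultimately show ?thesis by simp
      next
        case False
        then have "(norm v)\<^sup>2 \<ge> R\<^sup>2" using R3 by (intro power_mono) auto
        then have "ww v \<ge> 1 + R\<^sup>2" unfolding ww_def by simp
        then have "f0 v * (1 + R\<^sup>2) \<le> f0 v * ww v" using assms(3) by (simp add: mult_left_mono)
        moreover have "1 + R\<^sup>2 > 0" by (simp add: add_pos_nonneg)
        ultimately have "f0 v * ww v / (1 + R\<^sup>2) \<ge> f0 v"
          by (simp add: le_divide_eq)
        moreover have "f0 v * phiR R v \<ge> 0" using assms(3) phiR_range[of R v] by simp
        ultimately show ?thesis by simp
      qed
      have "(LINT v|lborel. f0 v - f0 v * ww v / (1 + R\<^sup>2)) \<le> (LINT v|lborel. f0 v * phiR R v)"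
        using i1 i2 pw by (intro integral_mono) auto
      moreover have "(LINT v|lborel. f0 v - f0 v * ww v / (1 + R\<^sup>2)) = 1 - A / (1 + R\<^sup>2)"
        using intf0 intf0w assms(5) unfolding A_def by (simp add: integral_diff)
      ultimately show ?thesis by simp
    qed
    have eq: "(LINT v|lborel. f t v * phiR R v) =
           (LINT v|lborel. f0 v * phiR R v) + (LINT s:{0..t}|lborel. Q_weak \<alpha> (f s) (phiR R))"
      using weak phiR_test[of R] t0 by blast
    have "1 - A / (1 + R\<^sup>2) - C / R \<le> 0"
      using eq lhs0[of R] f0b setQ by linarith
    moreover have "A / (1 + R\<^sup>2) < 1 / 2"
    proof -
      have "R\<^sup>2 \<ge> R" using R3 by (simp add: power2_eq_square)
      then have "2 * A < 1 + R\<^sup>2" using R3 Cnn unfolding R_def by simp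
      then show ?thesis by (simp add: field_simps add_pos_nonneg)
    qed
    moreover have "C / R < 1 / 2"
      using R3 Ann Cnn unfolding R_def by (simp add: field_simps)
    ultimately show False by linarith
  qed
  have Eset: "{ereal T | T. T \<ge> 0 \<and> (\<forall>t>T. energy f t = 0)} = {}"
  proof -
    have "\<not> (T \<ge> 0 \<and> (\<forall>t>T. energy f t = 0))" for T
    proof
      assume "T \<ge> 0 \<and> (\<forall>t>T. energy f t = 0)"
      then show False using key[of "T + 1"] by simp
    qed
    then show ?thesis by auto
  qed
  show ?thesis unfolding cooling_time_def Eset by (simp add: top_ereal_def)
qed

end
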